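(* If $X$ is a regular set star Menger space, then every closed discrete subspace of $X$ has cardinality less than $\mathfrak c$. Hence $e(X)\leq\mathfrak c$.
   Context: For a family $\mathcal U$ of subsets of $X$ and $A\subseteq X$, $st(A,\mathcal U)=\bigcup\{U\in\mathcal U: U\cap A\neq\emptyset\}$. A space $X$ is set star Menger if for every nonempty $A\subseteq X$ and every sequence $(\mathcal U_n:n\in\omega)$ of families of open subsets of $X$ with $\overline A\subseteq\bigcup\mathcal U_n$ for all $n$, there are finite $\mathcal V_n\subseteq\mathcal U_n$ ($n\in\omega$) with $A\subseteq\bigcup_{n}st(\bigcup\mathcal V_n,\mathcal U_n)$. The extent $e(X)$ is the supremum of cardinalities of closed discrete subsets of $X$; $\mathfrak c=2^{\aleph_0}$. *)

theory Defs
  imports "HOL-Analysis.Analysis" "HOL-Library.Equipollence"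
begin

definition st :: "'a set \<Rightarrow> 'a set set \<Rightarrow> 'a set" where
  "st A \<U> = \<Union>{U \<in> \<U>. U \<inter> A \<noteq> {}}"

definition set_star_Menger :: "'a topology \<Rightarrow> bool" where
  "set_star_Menger X \<longleftrightarrow>
     (\<forall>A (\<U> :: nat \<Rightarrow> 'a set set). A \<noteq> {} \<and> A \<subseteq> topspace X \<and>
        (\<forall>n. (\<forall>U\<in>\<U> n. openin X U) \<and> X closure_of A \<subseteq> \<Union>(\<U> n))
      \<longrightarrow> (\<exists>\<V>. (\<forall>n. finite (\<V> n) \<and> \<V> n \<subseteq> \<U> n) \<and>
                 A \<subseteq> (\<Union>n. st (\<Union>(\<V> n)) (\<U> n))))"

end

theory Submission imports Defs begin

lemma lepoll_total: "A \<lesssim> B \<or> B \<lesssim> A"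
  using ordLeq_total[OF card_of_Well_order[of A] card_of_Well_order[of B]]
  unfolding lepoll_def card_of_ordLeq[symmetric] .

definition elemc :: "nat set \<Rightarrow> nat \<Rightarrow> nat \<Rightarrow> nat set" where
  "elemc t n i = {m. 3 * prod_encode (prod_encode (n,i), m) + 1 \<in> t}"
definition lenc :: "nat set \<Rightarrow> nat \<Rightarrow> nat" where
  "lenc t n = (LEAST k. 3 * prod_encode (n,k) + 2 \<in> t)"
definition seqc :: "nat set \<Rightarrow> nat \<Rightarrow> nat set list" where
  "seqc t n = map (elemc t n) [0..<lenc t n]"

lemma m3: "(3::nat)*a \<noteq> 3*b+1" "(3::nat)*a \<noteq> 3*b+2" "(3::nat)*a+1 \<noteq> 3*b+2"
  by presburger+

lemma d3: "Suc (3*x) div 3 = (x::nat)" "Suc (Suc (3*x)) div 3 = x" "Suc (3*x) mod 3 = 1" "Suc (Suc (3*x)) mod 3 = 2"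
  by presburger+

lemma seqc_surj:
  fixes \<sigma> :: "nat \<Rightarrow> nat set list"
  shows "\<exists>t. seqc t = \<sigma> \<and> (\<forall>n. t \<notin> set (\<sigma> n))"
proof -
  define c where "c k = (case prod_decode k of (n,i) \<Rightarrow> \<sigma> n ! i)" for k
  define t where "t = {x. (x mod 3 = 0 \<and> x \<notin> c (x div 3)) \<or>
     (x mod 3 = 1 \<and> (case prod_decode (x div 3) of (a,m) \<Rightarrow> (case prod_decode a of (n,i) \<Rightarrow> m \<in> \<sigma> n ! i))) \<or>
     (x mod 3 = 2 \<and> (case prod_decode (x div 3) of (n,k) \<Rightarrow> k = length (\<sigma> n)))}"
  have t1: "3*k \<in> t \<longleftrightarrow> 3*k \<notin> c k" for k
    unfolding t_def by (simp add: d3)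
  have t2: "3 * prod_encode (prod_encode (n,i), m) + 1 \<in> t \<longleftrightarrow> m \<in> \<sigma> n ! i" for n i m
    unfolding t_def by (simp add: d3)
  have t3: "3 * prod_encode (n,k) + 2 \<in> t \<longleftrightarrow> k = length (\<sigma> n)" for n k
    unfolding t_def by (simp add: d3)
  have e: "elemc t n i = \<sigma> n ! i" for n i
    unfolding elemc_def using t2 by auto
  have l: "lenc t n = length (\<sigma> n)" for n
    unfolding lenc_def t3 by (rule Least_equality) simp_all
  have e': "elemc t n = nth (\<sigma> n)" for n
    by (rule ext) (rule e)
  have s: "seqc t = \<sigma>"
    by (rule ext) (simp only: seqc_def e' l map_nth)
  have "t \<notin> set (\<sigma> n)" for n
  proof
    assume "t \<in> set (\<sigma> n)"
    then obtain i where i: "i < length (\<sigma> n)" "\<sigma> n ! i = t" by (auto simp: in_set_conv_nth)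
    define k where "k = prod_encode (n,i)"
    have ck: "c k = t" using i by (simp add: c_def k_def)
    have "3*k \<in> t \<longleftrightarrow> 3*k \<notin> t" using t1[of k] unfolding ck .
    then show False by blast
  qed
  with s show ?thesis by blast
qed


lemma allE2_helper:
  assumes "\<forall>A \<U>. R A \<U>" shows "R a u"
  using assms by blast

theorem theorem2p2:
  fixes X :: "'a topology"
  assumes "regular_space X" and "set_star_Menger X"
  shows "\<forall>D. closedin X D \<and> subtopology X D = discrete_topology D
           \<longrightarrow> D \<prec> (UNIV :: real set)"
proof (intro allI impI)
  fix D assume H: "closedin X D \<and> subtopology X D = discrete_topology D"
  show "D \<prec> (UNIV :: real set)"
  proof (rule ccontr)
    assume nl: "\<not> D \<prec> (UNIV :: real set)"
    have "(UNIV::real set) \<lesssim> D"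
      using lepoll_total[of D "UNIV::real set"] nl
      by (meson eqpoll_imp_lepoll eqpoll_sym lesspoll_def)
    then have "(UNIV::nat set set) \<lesssim> D"
      using nat_sets_eqpoll_reals lepoll_trans1 by blast
    then obtain j :: "nat set \<Rightarrow> 'a" where jinj: "inj j" and jD: "range j \<subseteq> D"
      unfolding lepoll_def by blast
    have Dt: "D \<subseteq> topspace X" using H closedin_subset by blast
    have clsub: "closedin X S" if "S \<subseteq> D" for S
    proof -
      have "closedin (subtopology X D) S" using H that by simp
      then show ?thesis using H closedin_closed_subtopology by blast
    qed
    have "\<forall>d\<in>D. \<exists>B. openin X B \<and> d \<in> B \<and> disjnt (D - {d}) (X closure_of B)"
    proof
      fix d assume d: "d \<in> D"
      have "closedin X (D - {d})" using clsub by blast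
      moreover have "d \<in> topspace X - (D - {d})" using d Dt by blast
      ultimately show "\<exists>B. openin X B \<and> d \<in> B \<and> disjnt (D - {d}) (X closure_of B)"
        using assms(1) unfolding regular_space by blast
    qed
    then obtain B where B: "\<And>d. d \<in> D \<Longrightarrow> openin X (B d) \<and> d \<in> B d \<and> disjnt (D - {d}) (X closure_of B d)"
      by metis
    have Bsub: "B d \<subseteq> X closure_of B d" if "d \<in> D" for d
      using B[OF that] closure_of_subset openin_subset by metis
    have key: "e = d" if "d \<in> D" "e \<in> D" "e \<in> X closure_of B d" for d e
      using B[OF that(1)] that by (auto simp: disjnt_iff)
    define W where "W n t = B (j t) \<inter> (topspace X - \<Union> ((\<lambda>s. X closure_of B (j s)) ` {s \<in> set (seqc t n). s \<noteq> t}))" for n t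
    have jD': "j t \<in> D" for t using jD by blast
    have Wopen: "openin X (W n t)" for n t
      unfolding W_def
      by (intro openin_Int openin_diff openin_topspace closedin_Union B[OF jD', THEN conjunct1]) auto
    have Win: "j t \<in> W n t" for n t
    proof -
      have "j t \<notin> X closure_of B (j s)" if "s \<noteq> t" for s
        using key[OF jD' jD', of t s] that jinj injD by metis
      then show ?thesis unfolding W_def using B[OF jD'] Dt jD' by auto
    qed
    have WD: "x = j t" if "x \<in> W n t" "x \<in> D" for x n t
      using that key[OF jD', of x t] Bsub[OF jD', of t] unfolding W_def by blast
    have Wdisj: "W n t \<inter> W n s = {}" if "s \<in> set (seqc t n)" "s \<noteq> t" for n s t
      using that Bsub[OF jD', of s] unfolding W_def by blast
    have Winj: "inj (W n)" for n
      by (metis WD Win injI jD' jinj injD)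
    have Aclosed: "X closure_of range j = range j"
      using clsub[OF jD] closure_of_closedin by blast
    have "\<exists>\<V>. (\<forall>n. finite (\<V> n) \<and> \<V> n \<subseteq> range (W n)) \<and>
                 range j \<subseteq> (\<Union>n. st (\<Union>(\<V> n)) (range (W n)))"
    proof -
      have pre: "range j \<noteq> {} \<and> range j \<subseteq> topspace X \<and>
        (\<forall>n. (\<forall>U\<in>range (W n). openin X U) \<and> X closure_of range j \<subseteq> \<Union>(range (W n)))"
      proof (intro conjI allI ballI)
        show "range j \<noteq> {}" by simp
        show "range j \<subseteq> topspace X" using Dt jD by (rule order_trans[rotated])
        fix n
        show "openin X U" if "U \<in> range (W n)" for U using that Wopen by auto
        show "X closure_of range j \<subseteq> \<Union>(range (W n))"
          unfolding Aclosed using Win by auto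
      qed
      show ?thesis
        by (rule assms(2)[unfolded set_star_Menger_def, THEN spec, THEN spec, THEN mp, OF pre])
    qed
    then obtain V where VV: "(\<forall>n. finite (V n) \<and> V n \<subseteq> range (W n)) \<and>
      range j \<subseteq> (\<Union>n. st (\<Union>(V n)) (range (W n)))" by (rule exE)
    have V: "\<And>n. finite (V n)" "\<And>n. V n \<subseteq> range (W n)" using VV[THEN conjunct1] by simp_all
    have cov: "range j \<subseteq> (\<Union>n. st (\<Union>(V n)) (range (W n)))" using VV by (rule conjunct2)
    have fin: "finite (W n -` V n)" for n
      using V(1) Winj by (simp add: finite_vimageI)
    define \<sigma> where "\<sigma> n = (SOME xs. set xs = W n -` V n)" for n
    have \<sigma>: "set (\<sigma> n) = W n -` V n" for n
      unfolding \<sigma>_def by (rule someI_ex) (simp add: fin finite_list)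
    obtain t where t: "seqc t = \<sigma>" "\<And>n. t \<notin> set (\<sigma> n)"
      using seqc_surj by blast
    obtain n where "j t \<in> st (\<Union>(V n)) (range (W n))" using cov by blast
    then obtain s where s: "j t \<in> W n s" "W n s \<inter> \<Union>(V n) \<noteq> {}"
      unfolding st_def by blast
    have "s = t" using WD[OF s(1) jD'] jinj by (simp add: inj_def)
    then obtain s' where s': "W n s' \<in> V n" "W n t \<inter> W n s' \<noteq> {}"
      using s V(2) by blast
    have "s' \<in> set (seqc t n)" using s' \<sigma> t by auto
    moreover have "s' \<noteq> t" using s' \<sigma> t(2) by auto
    ultimately show False using Wdisj s'(2) by blast
  qed
qed

end
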